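(* Let $\mathcal G$ be an input-output network with input nodes $\iota_1,\dots,\iota_n$ and output node $o$. Partition the remaining nodes into: $\sigma$-nodes (upstream from $o$ and downstream from at least one input node), $d$-nodes (not downstream from any input node), and $u$-nodes (downstream from at least one input node but not upstream from $o$). Consider an admissible system of the form $$\dot x_{\iota_m}=f_{\iota_m}(x_{\iota},x_\sigma,x_d,x_o,\mathcal I)\ (m=1,\dots,n),\quad \dot x_\sigma=f_\sigma(x_\iota,x_\sigma,x_d,x_o),\quad \dot x_u=f_u(x_\iota,x_\sigma,x_u,x_d,x_o),$$ $$\dot x_d=f_d(x_d),\quad \dot x_o=f_o(x_\iota,x_\sigma,x_d,x_o),$$ where $x_\iota=(x_{\iota_1},\dots,x_{\iota_n})$. Suppose $X_0=(x_\iota^*,x_\sigma^*,x_u^*,x_d^*,x_o^* )$ is a linearly stable equilibrium of this system (for some fixed value of $\mathcal I$). Then the core admissible system obtained by freezing $x_d$ at $x_d^*$, $$\dot x_{\iota_m}=f_{\iota_m}(x_\iota,x_\sigma,x_d^*,x_o,\mathcal I),\quad \dot x_\sigma=f_\sigma(x_\iota,x_\sigma,x_d^*,x_o),\quad \dot x_o=f_o(x_\iota,x_\sigma,x_d^*,x_o),$$ has a linearly stable equilibrium at $Y_0=(x_\iota^*,x_\sigma^*,x_o^* )$ (for the same value of $\mathcal I$).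
   Context: A node $b$ is downstream from a node $a$ (and $a$ upstream from $b$) if there is a directed path from $a$ to $b$; every node is upstream and downstream from itself. An admissible system assigns a real variable to each node, is smooth, only the input-node equations depend on the scalar input parameter $\mathcal I$, and $\partial f_j/\partial x_\ell\equiv0$ unless there is an arrow $\ell\to j$. An equilibrium is linearly stable if all eigenvalues of the Jacobian there have negative real part. *)

theory Defs
  imports "HOL-Analysis.Analysis"
begin

text \<open>Nodes form a finite type 'n; a state is a vector in real^'n; the vector field
  of an admissible system is f :: 'n => real^'n => real => real, where the last argument
  is the input parameter I.\<close>

definition pderiv_x :: "(real^'n \<Rightarrow> real \<Rightarrow> real) \<Rightarrow> real^'n \<Rightarrow> real \<Rightarrow> 'n \<Rightarrow> real" where
  "pderiv_x g x I k = deriv (\<lambda>t. g (x + t *\<^sub>R axis k 1) I) 0"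

text \<open>Smoothness (C-infinity): g belongs to a family of continuous functions closed under
  taking partial derivatives in every direction (all state coordinates and I).\<close>
definition smooth_fun :: "(real^'n \<Rightarrow> real \<Rightarrow> real) \<Rightarrow> bool" where
  "smooth_fun g \<longleftrightarrow> (\<exists>S. g \<in> S \<and>
     (\<forall>h\<in>S. continuous_on UNIV (\<lambda>(x, I). h x I)
        \<and> (\<forall>k. \<exists>h'\<in>S. \<forall>x I. ((\<lambda>t. h (x + t *\<^sub>R axis k 1) I) has_real_derivative h' x I) (at 0))
        \<and> (\<exists>h'\<in>S. \<forall>x I. ((\<lambda>t. h x (I + t)) has_real_derivative h' x I) (at 0))))"

definition downstream :: "('n \<times> 'n) set \<Rightarrow> 'n \<Rightarrow> 'n \<Rightarrow> bool" where
  "downstream E a b \<longleftrightarrow> (a, b) \<in> E\<^sup>*"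

definition sigma_nodes :: "('n \<times> 'n) set \<Rightarrow> 'n set \<Rightarrow> 'n \<Rightarrow> 'n set" where
  "sigma_nodes E Ins out = {k. k \<notin> Ins \<and> k \<noteq> out \<and> downstream E k out
      \<and> (\<exists>i\<in>Ins. downstream E i k)}"

definition d_nodes :: "('n \<times> 'n) set \<Rightarrow> 'n set \<Rightarrow> 'n \<Rightarrow> 'n set" where
  "d_nodes E Ins out = {k. k \<notin> Ins \<and> k \<noteq> out \<and> \<not> (\<exists>i\<in>Ins. downstream E i k)}"

definition u_nodes :: "('n \<times> 'n) set \<Rightarrow> 'n set \<Rightarrow> 'n \<Rightarrow> 'n set" where
  "u_nodes E Ins out = {k. k \<notin> Ins \<and> k \<noteq> out \<and> \<not> downstream E k out
      \<and> (\<exists>i\<in>Ins. downstream E i k)}"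

definition admissible :: "('n \<times> 'n) set \<Rightarrow> 'n set \<Rightarrow> ('n \<Rightarrow> real^'n \<Rightarrow> real \<Rightarrow> real) \<Rightarrow> bool" where
  "admissible E Ins f \<longleftrightarrow>
     (\<forall>j. smooth_fun (f j))
   \<and> (\<forall>j. j \<notin> Ins \<longrightarrow> (\<forall>x I I'. f j x I = f j x I'))
   \<and> (\<forall>j l. l \<noteq> j \<and> (l, j) \<notin> E \<longrightarrow> (\<forall>x I. pderiv_x (f j) x I l = 0))"

definition eigenvalue_on :: "'n set \<Rightarrow> ('n \<Rightarrow> 'n \<Rightarrow> real) \<Rightarrow> complex \<Rightarrow> bool" where
  "eigenvalue_on S M mu \<longleftrightarrow> (\<exists>v :: 'n \<Rightarrow> complex. (\<exists>k\<in>S. v k \<noteq> 0)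
      \<and> (\<forall>j\<in>S. (\<Sum>k\<in>S. complex_of_real (M j k) * v k) = mu * v j))"

definition lin_stable_equilibrium ::
  "'n set \<Rightarrow> ('n \<Rightarrow> real^'n \<Rightarrow> real \<Rightarrow> real) \<Rightarrow> real^'n \<Rightarrow> real \<Rightarrow> bool" where
  "lin_stable_equilibrium S f X0 I0 \<longleftrightarrow>
     (\<forall>j\<in>S. f j X0 I0 = 0)
   \<and> (\<forall>mu. eigenvalue_on S (\<lambda>j k. pderiv_x (f j) X0 I0 k) mu \<longrightarrow> Re mu < 0)"

definition freeze :: "'n set \<Rightarrow> real^'n \<Rightarrow> real^'n \<Rightarrow> real^'n" where
  "freeze S X0 y = (\<chi> k. if k \<in> S then y $ k else X0 $ k)"

end

theory Submission
  imports Defs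
begin

theorem lemma3p1:
  fixes E :: "('n::finite \<times> 'n) set" and Ins :: "'n set" and out :: 'n
    and f :: "'n \<Rightarrow> real^'n \<Rightarrow> real \<Rightarrow> real" and X0 :: "real^'n" and I0 :: real
  assumes net: "Ins \<noteq> {}" "out \<notin> Ins"
    and adm: "admissible E Ins f"
    and form_core: "\<And>j x x' I. j \<in> Ins \<union> sigma_nodes E Ins out \<union> {out} \<Longrightarrow>
        (\<forall>k\<in>Ins \<union> sigma_nodes E Ins out \<union> d_nodes E Ins out \<union> {out}. x $ k = x' $ k) \<Longrightarrow>
        f j x I = f j x' I"
    and form_d: "\<And>j x x' I. j \<in> d_nodes E Ins out \<Longrightarrow>
        (\<forall>k\<in>d_nodes E Ins out. x $ k = x' $ k) \<Longrightarrow> f j x I = f j x' I"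
    and stable: "lin_stable_equilibrium UNIV f X0 I0"
  shows "lin_stable_equilibrium (Ins \<union> sigma_nodes E Ins out \<union> {out})
           (\<lambda>j y I. f j (freeze (Ins \<union> sigma_nodes E Ins out \<union> {out}) X0 y) I) X0 I0"
proof -
  define C where "C = Ins \<union> sigma_nodes E Ins out \<union> {out}"
  define D where "D = d_nodes E Ins out"
  define U where "U = u_nodes E Ins out"
  define M where "M = (\<lambda>j k. pderiv_x (f j) X0 I0 k)"
  have part: "\<And>k. k \<in> C \<or> k \<in> D \<or> k \<in> U"
    unfolding C_def D_def U_def sigma_nodes_def d_nodes_def u_nodes_def by blast
  have disj: "C \<inter> D = {}" "C \<inter> U = {}" "D \<inter> U = {}"
    unfolding C_def D_def U_def sigma_nodes_def d_nodes_def u_nodes_def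
    using net(2) by (auto simp: downstream_def)
  have univ: "UNIV = C \<union> U \<union> D" using part by blast
  have sumsplit: "\<And>g::'n \<Rightarrow> complex. sum g UNIV = sum g C + sum g U + sum g D"
  proof -
    fix g :: "'n \<Rightarrow> complex"
    have "sum g (C \<union> U \<union> D) = sum g (C \<union> U) + sum g D"
      by (rule sum.union_disjoint) (use disj in auto)
    also have "sum g (C \<union> U) = sum g C + sum g U"
      by (rule sum.union_disjoint) (use disj in auto)
    finally show "sum g UNIV = sum g C + sum g U + sum g D" using univ by simp
  qed
  have fc: "f j x I = f j x' I" if "j \<in> C" "\<forall>k\<in>C \<union> D. x $ k = x' $ k" for j x x' I
    using that unfolding C_def D_def by (intro form_core) auto
  have MCU: "M j k = 0" if "j \<in> C" "k \<in> U" for j k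
  proof -
    have "(\<lambda>t. f j (X0 + t *\<^sub>R axis k 1) I0) = (\<lambda>t. f j X0 I0)"
    proof
      fix t
      show "f j (X0 + t *\<^sub>R axis k 1) I0 = f j X0 I0"
        apply (rule fc)
        using that disj by (auto simp: axis_def)
    qed
    then show ?thesis unfolding M_def pderiv_x_def by simp
  qed
  have MD: "M j k = 0" if "j \<in> D" "k \<notin> D" for j k
  proof -
    have "(\<lambda>t. f j (X0 + t *\<^sub>R axis k 1) I0) = (\<lambda>t. f j X0 I0)"
    proof
      fix t
      show "f j (X0 + t *\<^sub>R axis k 1) I0 = f j X0 I0"
        apply (rule form_d)
        using that unfolding D_def[symmetric]
        by (auto simp: axis_def)
    qed
    then show ?thesis unfolding M_def pderiv_x_def by simp
  qed
  have frz: "freeze C X0 (X0 + t *\<^sub>R axis k 1) = X0 + t *\<^sub>R axis k 1" if "k \<in> C" for k t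
    using that by (auto simp: freeze_def vec_eq_iff axis_def)
  have Mcore: "pderiv_x (\<lambda>y I. f j (freeze C X0 y) I) X0 I0 k = M j k" if "k \<in> C" for j k
    unfolding pderiv_x_def M_def using frz[OF that] by simp
  have eigfull: "Re mu < 0" if "\<exists>k. z k \<noteq> 0"
      "\<forall>j. (\<Sum>k\<in>UNIV. complex_of_real (M j k) * z k) = mu * z j" for mu z
    using stable that unfolding lin_stable_equilibrium_def eigenvalue_on_def M_def by blast
  have fz: "freeze C X0 X0 = X0" by (auto simp: freeze_def vec_eq_iff)
  show ?thesis
    unfolding lin_stable_equilibrium_def C_def[symmetric]
  proof (intro conjI ballI allI impI)
    fix j assume "j \<in> C"
    then show "f j (freeze C X0 X0) I0 = 0" using stable fz
      by (simp add: lin_stable_equilibrium_def)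
  next
    fix mu
    assume ev: "eigenvalue_on C (\<lambda>j k. pderiv_x (\<lambda>y I. f j (freeze C X0 y) I) X0 I0 k) mu"
    then obtain v where v1: "\<exists>k\<in>C. v k \<noteq> 0"
      and v2: "\<forall>j\<in>C. (\<Sum>k\<in>C. complex_of_real (M j k) * v k) = mu * v j"
      unfolding eigenvalue_on_def using Mcore by (auto cong: sum.cong)
    define L where "L = (\<lambda>w::complex^'n. \<chi> j. if j \<in> U
       then (\<Sum>k\<in>U. complex_of_real (M j k) * w$k) - mu * w$j else w$j)"
    have linL: "linear L"
      by (rule linearI) (auto simp: L_def vec_eq_iff sum.distrib algebra_simps scaleR_sum_right)
    show "Re mu < 0"
    proof (cases "inj L")
      case False
      then obtain w where w1: "L w = 0" and w2: "w \<noteq> 0"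
        using linL linear_injective_0 by blast
      have wU: "w $ j = 0" if "j \<notin> U" for j
      proof -
        have "L w $ j = 0" using w1 by simp
        then show ?thesis using that unfolding L_def by simp
      qed
      define z where "z = (\<lambda>k. if k \<in> U then w $ k else 0)"
      have zU: "z k = w $ k" for k using wU by (auto simp: z_def)
      show ?thesis
      proof (rule eigfull[of z])
        show "\<exists>k. z k \<noteq> 0" using w2 zU by (auto simp: vec_eq_iff)
        show "\<forall>j. (\<Sum>k\<in>UNIV. complex_of_real (M j k) * z k) = mu * z j"
        proof
          fix j
          have sC: "(\<Sum>k\<in>C. complex_of_real (M j k) * z k) = 0"
            using disj by (intro sum.neutral) (auto simp: z_def)
          have sD: "(\<Sum>k\<in>D. complex_of_real (M j k) * z k) = 0"
            using disj by (intro sum.neutral) (auto simp: z_def)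
          consider "j \<in> C" | "j \<in> D" | "j \<in> U" using part by blast
          then show "(\<Sum>k\<in>UNIV. complex_of_real (M j k) * z k) = mu * z j"
          proof cases
            case 1
            have "(\<Sum>k\<in>U. complex_of_real (M j k) * z k) = 0"
              using MCU[OF 1] by (intro sum.neutral) auto
            then show ?thesis using sumsplit sC sD 1 disj by (auto simp: z_def)
          next
            case 2
            have "(\<Sum>k\<in>U. complex_of_real (M j k) * z k) = 0"
              using MD[OF 2] disj by (intro sum.neutral) auto
            then show ?thesis using sumsplit sC sD 2 disj by (auto simp: z_def)
          next
            case 3
            have "L w $ j = 0" using w1 by simp
            then have "(\<Sum>k\<in>U. complex_of_real (M j k) * z k) = mu * z j"
              using 3 zU unfolding L_def by simp
            then show ?thesis using sumsplit sC sD by simp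
          qed
        qed
      qed
    next
      case True
      define b where "b = (\<chi> j. if j \<in> U then - (\<Sum>k\<in>C. complex_of_real (M j k) * v k) else 0)"
      have "surj L" using linear_inj_imp_surj[OF linL True] .
      then obtain w where wb: "L w = b" by (metis surjD)
      define z where "z = (\<lambda>k. if k \<in> C then v k else if k \<in> U then w $ k else 0)"
      show ?thesis
      proof (rule eigfull[of z])
        show "\<exists>k. z k \<noteq> 0" using v1 by (auto simp: z_def)
        show "\<forall>j. (\<Sum>k\<in>UNIV. complex_of_real (M j k) * z k) = mu * z j"
        proof
          fix j
          have sC: "(\<Sum>k\<in>C. complex_of_real (M j k) * z k) = (\<Sum>k\<in>C. complex_of_real (M j k) * v k)"
            by (intro sum.cong) (auto simp: z_def)
          have sU: "(\<Sum>k\<in>U. complex_of_real (M j k) * z k) = (\<Sum>k\<in>U. complex_of_real (M j k) * w $ k)"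
            using disj by (intro sum.cong) (auto simp: z_def)
          have sD: "(\<Sum>k\<in>D. complex_of_real (M j k) * z k) = 0"
            using disj by (intro sum.neutral) (auto simp: z_def)
          consider "j \<in> C" | "j \<in> D" | "j \<in> U" using part by blast
          then show "(\<Sum>k\<in>UNIV. complex_of_real (M j k) * z k) = mu * z j"
          proof cases
            case 1
            have "(\<Sum>k\<in>U. complex_of_real (M j k) * z k) = 0"
              using MCU[OF 1] by (intro sum.neutral) auto
            then show ?thesis using sumsplit[of "\<lambda>k. complex_of_real (M j k) * z k"] sC sD 1 v2
              by (auto simp: z_def)
          next
            case 2
            have "(\<Sum>k\<in>U. complex_of_real (M j k) * z k) = 0"
              using MD[OF 2] disj by (intro sum.neutral) auto
            moreover have "(\<Sum>k\<in>C. complex_of_real (M j k) * z k) = 0"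
              using MD[OF 2] disj by (intro sum.neutral) auto
            ultimately show ?thesis using sumsplit[of "\<lambda>k. complex_of_real (M j k) * z k"] sD 2 disj
              by (auto simp: z_def)
          next
            case 3
            have "L w $ j = b $ j" using wb by simp
            then have "(\<Sum>k\<in>U. complex_of_real (M j k) * w $ k) - mu * w $ j
                = - (\<Sum>k\<in>C. complex_of_real (M j k) * v k)"
              using 3 unfolding L_def b_def by simp
            moreover have "z j = w $ j" using 3 disj by (auto simp: z_def)
            ultimately show ?thesis using sumsplit[of "\<lambda>k. complex_of_real (M j k) * z k"] sC sU sD
              by (simp add: algebra_simps)
          qed
        qed
      qed
    qed
  qed
qed

end
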